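(* (1) For every plane poset $P$, $\Delta_0(P)=\sum_{P_1P_2=P}P_1\otimes P_2$, the sum running over pairs of plane posets $(P_1,P_2)$ (possibly empty) with $P_1P_2=P$. (2) For any plane posets $P,Q$, $\langle P,Q\rangle_0\neq 0$ if and only if there exists $n\in\mathbb{N}$ such that $P=Q=\bullet^n$, where $\bullet^n$ is the plane poset with $n$ elements, no two of them $\leq_h$-comparable. Consequently, the kernel of the pairing $\langle-,-\rangle_0$ is the subspace spanned by the plane posets not of the form $\bullet^n$, which is a two-sided ideal of $(\mathcal{H}_{\mathcal{PP}},m)$.
   Context: A plane poset is a finite set with two partial orders $\leq_h,\leq_r$ such that two distinct elements are $\leq_h$-comparable iff they are not $\leq_r$-comparable, considered up to isomorphism; $\mathcal{H}_{\mathcal{PP}}$ is the vector space over a field $K$ with basis these classes. $PQ$ (product $m$) is the plane poset on $P\sqcup Q$ with $P,Q$ plane subposets, no $\leq_h$-comparability between $P$ and $Q$, and $x<_r y$ for $x\in P,y\in Q$. A biideal of $P$ is a subset $I$ with $x\in I$ and ($x\leq_h y$ or $x\leq_r y$) implying $y\in I$. $\Delta_0(P)=\sum_{I\text{ biideal of }P}0^{h(P\setminus I,I)}(P\setminus I)\otimes I$ where $h(A,B)=\sharp\{(x,y)\in A\times B\mid x<_h y\}$ and $0^0=1$. On a plane poset, $x\leq y$ iff ($x\leq_h y$ or $x\leq_r y$) is a total order (known fact); for $P,Q$ of equal cardinality $\theta_{P,Q}$ is the increasing bijection $P\to Q$, and $P\leq Q$ means: $\theta_{P,Q}(x)\leq_h\theta_{P,Q}(y)$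 in $Q$ implies $x\leq_h y$ in $P$. $\iota(P)=(P,\leq_r,\leq_h)$. $\langle P,Q\rangle_0=0^{\phi(P,Q)}$ (with $0^0=1$) if $\iota(P)\leq Q$ and $0$ otherwise, where $\phi(P,Q)=\sharp\{(x,y)\in P^2\mid x<_r y,\ \theta_{P,Q}(x)<_h\theta_{P,Q}(y)\}+\sharp\{(x,y)\in P^2\mid x<_h y,\ \theta_{P,Q}(x)<_r\theta_{P,Q}(y)\}$. *)

theory Defs
  imports Main
begin

record 'a plane_poset =
  pcar :: "'a set"
  hle  :: "'a \<Rightarrow> 'a \<Rightarrow> bool"
  rle  :: "'a \<Rightarrow> 'a \<Rightarrow> bool"

definition plane_poset :: "'a plane_poset \<Rightarrow> bool" where
  "plane_poset P \<longleftrightarrow>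
     finite (pcar P) \<and>
     (\<forall>x y. hle P x y \<longrightarrow> x \<in> pcar P \<and> y \<in> pcar P) \<and>
     (\<forall>x y. rle P x y \<longrightarrow> x \<in> pcar P \<and> y \<in> pcar P) \<and>
     partial_order_on (pcar P) {(x, y). hle P x y} \<and>
     partial_order_on (pcar P) {(x, y). rle P x y} \<and>
     (\<forall>x\<in>pcar P. \<forall>y\<in>pcar P. x \<noteq> y \<longrightarrow>
        ((hle P x y \<or> hle P y x) \<longleftrightarrow> \<not> (rle P x y \<or> rle P y x)))"

definition pp_iso :: "'a plane_poset \<Rightarrow> 'b plane_poset \<Rightarrow> bool" where
  "pp_iso P Q \<longleftrightarrow> (\<exists>f. bij_betw f (pcar P) (pcar Q) \<and>
     (\<forall>x\<in>pcar P. \<forall>y\<in>pcar P. (hle P x y \<longleftrightarrow> hle Q (f x) (f y)) \<and>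
                               (rle P x y \<longleftrightarrow> rle Q (f x) (f y))))"

definition pp_prod :: "'a plane_poset \<Rightarrow> 'b plane_poset \<Rightarrow> ('a + 'b) plane_poset" where
  "pp_prod P Q = \<lparr> pcar = Inl ` pcar P \<union> Inr ` pcar Q,
     hle = (\<lambda>u v. case (u, v) of
              (Inl x, Inl y) \<Rightarrow> hle P x y
            | (Inr x, Inr y) \<Rightarrow> hle Q x y
            | _ \<Rightarrow> False),
     rle = (\<lambda>u v. case (u, v) of
              (Inl x, Inl y) \<Rightarrow> rle P x y
            | (Inr x, Inr y) \<Rightarrow> rle Q x y
            | (Inl x, Inr y) \<Rightarrow> x \<in> pcar P \<and> y \<in> pcar Q
            | (Inr x, Inl y) \<Rightarrow> False) \<rparr>"

definition restr :: "'a plane_poset \<Rightarrow> 'a set \<Rightarrow> 'a plane_poset" where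
  "restr P S = \<lparr> pcar = pcar P \<inter> S,
     hle = (\<lambda>x y. hle P x y \<and> x \<in> S \<and> y \<in> S),
     rle = (\<lambda>x y. rle P x y \<and> x \<in> S \<and> y \<in> S) \<rparr>"

definition biideal :: "'a plane_poset \<Rightarrow> 'a set \<Rightarrow> bool" where
  "biideal P I \<longleftrightarrow> I \<subseteq> pcar P \<and>
     (\<forall>x\<in>I. \<forall>y\<in>pcar P. (hle P x y \<or> rle P x y) \<longrightarrow> y \<in> I)"

definition hcount :: "'a plane_poset \<Rightarrow> 'a set \<Rightarrow> 'a set \<Rightarrow> nat" where
  "hcount P A B = card {(x, y). x \<in> A \<and> y \<in> B \<and> hle P x y \<and> x \<noteq> y}"

text \<open>The total order x \<le> y iff x \<le>_h y or x \<le>_r y, the rank in it,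
  and the increasing bijection theta.\<close>
definition tle :: "'a plane_poset \<Rightarrow> 'a \<Rightarrow> 'a \<Rightarrow> bool" where
  "tle P x y \<longleftrightarrow> hle P x y \<or> rle P x y"

definition rank :: "'a plane_poset \<Rightarrow> 'a \<Rightarrow> nat" where
  "rank P x = card {y \<in> pcar P. tle P y x \<and> y \<noteq> x}"

definition theta :: "'a plane_poset \<Rightarrow> 'b plane_poset \<Rightarrow> 'a \<Rightarrow> 'b" where
  "theta P Q x = (THE y. y \<in> pcar Q \<and> rank Q y = rank P x)"

definition iota :: "'a plane_poset \<Rightarrow> 'a plane_poset" where
  "iota P = \<lparr> pcar = pcar P, hle = rle P, rle = hle P \<rparr>"

definition pp_le :: "'a plane_poset \<Rightarrow> 'b plane_poset \<Rightarrow> bool" where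
  "pp_le P Q \<longleftrightarrow> card (pcar P) = card (pcar Q) \<and>
     (\<forall>x\<in>pcar P. \<forall>y\<in>pcar P.
        hle Q (theta P Q x) (theta P Q y) \<longrightarrow> hle P x y)"

definition phi :: "'a plane_poset \<Rightarrow> 'b plane_poset \<Rightarrow> nat" where
  "phi P Q =
     card {(x, y). x \<in> pcar P \<and> y \<in> pcar P \<and> rle P x y \<and> x \<noteq> y \<and>
            hle Q (theta P Q x) (theta P Q y) \<and> theta P Q x \<noteq> theta P Q y}
   + card {(x, y). x \<in> pcar P \<and> y \<in> pcar P \<and> hle P x y \<and> x \<noteq> y \<and>
            rle Q (theta P Q x) (theta P Q y) \<and> theta P Q x \<noteq> theta P Q y}"

definition pairing0 :: "'a plane_poset \<Rightarrow> 'b plane_poset \<Rightarrow> 'k::field" where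
  "pairing0 P Q = (if pp_le (iota P) Q then (0::'k) ^ phi P Q else 0)"

definition dots :: "nat \<Rightarrow> nat plane_poset" where
  "dots n = \<lparr> pcar = {0..<n},
     hle = (\<lambda>x y. x = y \<and> x < n),
     rle = (\<lambda>x y. x \<le> y \<and> y < n) \<rparr>"

definition is_dot :: "'a plane_poset \<Rightarrow> bool" where
  "is_dot P \<longleftrightarrow> (\<exists>n. pp_iso P (dots n))"

text \<open>Canonical representatives of isomorphism classes: carrier {0..<n},
  with the natural order being the total order of the plane poset.
  The basis of H_PP is indexed by these.\<close>
definition canonical :: "nat plane_poset \<Rightarrow> bool" where
  "canonical C \<longleftrightarrow> plane_poset C \<and> pcar C = {0..<card (pcar C)} \<and>
     (\<forall>x\<in>pcar C. \<forall>y\<in>pcar C. x \<le> y \<longrightarrow> tle C x y)"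

definition canon :: "'a plane_poset \<Rightarrow> nat plane_poset" where
  "canon R = (THE C. canonical C \<and> pp_iso C R)"

text \<open>H_PP over K: finitely supported coefficient functions on the basis.\<close>
definition supp :: "(nat plane_poset \<Rightarrow> 'k::field) \<Rightarrow> nat plane_poset set" where
  "supp v = {P. v P \<noteq> 0}"

definition hpp :: "(nat plane_poset \<Rightarrow> 'k::field) set" where
  "hpp = {v. finite (supp v) \<and> (\<forall>P \<in> supp v. canonical P)}"

definition hmult :: "(nat plane_poset \<Rightarrow> 'k::field) \<Rightarrow> (nat plane_poset \<Rightarrow> 'k)
                      \<Rightarrow> (nat plane_poset \<Rightarrow> 'k)" where
  "hmult v w = (\<lambda>R. \<Sum>P\<in>supp v. \<Sum>Q\<in>supp w.
                    if canon (pp_prod P Q) = R then v P * w Q else 0)"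

definition pairing0_ext :: "(nat plane_poset \<Rightarrow> 'k::field) \<Rightarrow> (nat plane_poset \<Rightarrow> 'k) \<Rightarrow> 'k" where
  "pairing0_ext v w = (\<Sum>P\<in>supp v. \<Sum>Q\<in>supp w. v P * w Q * pairing0 P Q)"

definition kernel0 :: "(nat plane_poset \<Rightarrow> 'k::field) set" where
  "kernel0 = {v \<in> hpp. \<forall>w\<in>hpp. pairing0_ext v w = 0 \<and> pairing0_ext w v = 0}"

definition span_nondots :: "(nat plane_poset \<Rightarrow> 'k::field) set" where
  "span_nondots = {v. \<exists>S c. finite S \<and> (\<forall>P\<in>S. canonical P \<and> \<not> is_dot P) \<and>
       v = (\<lambda>R. \<Sum>P\<in>S. c P * (if R = P then 1 else 0))}"

text \<open>Elements of H_PP \<otimes> H_PP as coefficient functions on pairs of basis elements.\<close>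
definition delta0 :: "'a plane_poset \<Rightarrow> (nat plane_poset \<times> nat plane_poset \<Rightarrow> 'k::field)" where
  "delta0 P = (\<lambda>(X, Y). \<Sum>I\<in>{I. biideal P I}.
       if canon (restr P (pcar P - I)) = X \<and> canon (restr P I) = Y
       then (0::'k) ^ hcount P (pcar P - I) I else 0)"

definition deconc :: "'a plane_poset \<Rightarrow> (nat plane_poset \<times> nat plane_poset \<Rightarrow> 'k::field)" where
  "deconc P = (\<lambda>XY. \<Sum>P12\<in>{(P1, P2). canonical P1 \<and> canonical P2 \<and> pp_iso (pp_prod P1 P2) P}.
       if XY = P12 then 1 else 0)"

end

theory Submission
  imports Defs
begin



lemma pp_char:
  "plane_poset P \<longleftrightarrow> finite (pcar P) \<and>
     (\<forall>x y. hle P x y \<longrightarrow> x \<in> pcar P \<and> y \<in> pcar P) \<and>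
     (\<forall>x y. rle P x y \<longrightarrow> x \<in> pcar P \<and> y \<in> pcar P) \<and>
     (\<forall>x\<in>pcar P. hle P x x) \<and> (\<forall>x\<in>pcar P. rle P x x) \<and>
     (\<forall>x y z. hle P x y \<longrightarrow> hle P y z \<longrightarrow> hle P x z) \<and>
     (\<forall>x y z. rle P x y \<longrightarrow> rle P y z \<longrightarrow> rle P x z) \<and>
     (\<forall>x y. hle P x y \<longrightarrow> hle P y x \<longrightarrow> x = y) \<and>
     (\<forall>x y. rle P x y \<longrightarrow> rle P y x \<longrightarrow> x = y) \<and>
     (\<forall>x\<in>pcar P. \<forall>y\<in>pcar P. x \<noteq> y \<longrightarrow>
        ((hle P x y \<or> hle P y x) \<longleftrightarrow> \<not> (rle P x y \<or> rle P y x)))"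
  unfolding plane_poset_def partial_order_on_def preorder_on_def refl_on_def trans_def antisym_def
  by (auto; blast)

context fixes P :: "'a plane_poset" assumes pp: "plane_poset P" begin
lemmas pp_all = pp[unfolded pp_char]
lemma pp_fin: "finite (pcar P)" using pp_all[THEN conjunct1] by blast
lemma pp_hcar: "hle P x y \<Longrightarrow> x \<in> pcar P \<and> y \<in> pcar P" using pp_all[THEN conjunct2, THEN conjunct1] by blast
lemma pp_rcar: "rle P x y \<Longrightarrow> x \<in> pcar P \<and> y \<in> pcar P" using pp_all[THEN conjunct2, THEN conjunct2, THEN conjunct1] by blast
lemma pp_hrefl: "x \<in> pcar P \<Longrightarrow> hle P x x" using pp_all[THEN conjunct2, THEN conjunct2, THEN conjunct2, THEN conjunct1] by blast
lemma pp_rrefl: "x \<in> pcar P \<Longrightarrow> rle P x x" using pp_all[THEN conjunct2, THEN conjunct2, THEN conjunct2, THEN conjunct2, THEN conjunct1] by blast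
lemma pp_htrans: "hle P x y \<Longrightarrow> hle P y z \<Longrightarrow> hle P x z" using pp_all[THEN conjunct2, THEN conjunct2, THEN conjunct2, THEN conjunct2, THEN conjunct2, THEN conjunct1] by blast
lemma pp_rtrans: "rle P x y \<Longrightarrow> rle P y z \<Longrightarrow> rle P x z" using pp_all[THEN conjunct2, THEN conjunct2, THEN conjunct2, THEN conjunct2, THEN conjunct2, THEN conjunct2, THEN conjunct1] by blast
lemma pp_hanti: "hle P x y \<Longrightarrow> hle P y x \<Longrightarrow> x = y" using pp_all[THEN conjunct2, THEN conjunct2, THEN conjunct2, THEN conjunct2, THEN conjunct2, THEN conjunct2, THEN conjunct2, THEN conjunct1] by blast
lemma pp_ranti: "rle P x y \<Longrightarrow> rle P y x \<Longrightarrow> x = y" using pp_all[THEN conjunct2, THEN conjunct2, THEN conjunct2, THEN conjunct2, THEN conjunct2, THEN conjunct2, THEN conjunct2, THEN conjunct2, THEN conjunct1] by blast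
lemma pp_inc: "x \<in> pcar P \<Longrightarrow> y \<in> pcar P \<Longrightarrow> x \<noteq> y \<Longrightarrow>
        ((hle P x y \<or> hle P y x) \<longleftrightarrow> \<not> (rle P x y \<or> rle P y x))" using pp_all[THEN conjunct2, THEN conjunct2, THEN conjunct2, THEN conjunct2, THEN conjunct2, THEN conjunct2, THEN conjunct2, THEN conjunct2, THEN conjunct2] by blast

lemma tle_car: "tle P x y \<Longrightarrow> x \<in> pcar P \<and> y \<in> pcar P"
  unfolding tle_def using pp_hcar pp_rcar by blast
lemma tle_refl: "x \<in> pcar P \<Longrightarrow> tle P x x" unfolding tle_def using pp_hrefl by blast
lemma tle_total: "x \<in> pcar P \<Longrightarrow> y \<in> pcar P \<Longrightarrow> tle P x y \<or> tle P y x"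
  unfolding tle_def using pp_inc pp_hrefl by blast
lemma tle_antisym: "tle P x y \<Longrightarrow> tle P y x \<Longrightarrow> x = y"
  unfolding tle_def using pp_inc pp_hanti pp_ranti pp_hcar pp_rcar by blast
lemma tle_trans: assumes "tle P x y" "tle P y z" shows "tle P x z"
proof -
  have c: "x \<in> pcar P" "y \<in> pcar P" "z \<in> pcar P" using assms tle_car by auto
  show ?thesis
  proof (cases "x = y \<or> y = z \<or> x = z")
    case True then show ?thesis using assms tle_refl c by auto
  next
    case False
    have i1: "hle P x y \<Longrightarrow> \<not> rle P x y \<and> \<not> rle P y x" "hle P y x \<Longrightarrow> \<not> rle P x y \<and> \<not> rle P y x"
      using pp_inc[of x y] c False by blast+
    have i2: "hle P z y \<Longrightarrow> \<not> rle P z y \<and> \<not> rle P y z" "hle P y z \<Longrightarrow> \<not> rle P z y \<and> \<not> rle P y z"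
      using pp_inc[of z y] c False by blast+
    have i3: "\<not> (hle P x z \<or> hle P z x) \<Longrightarrow> rle P x z \<or> rle P z x" using pp_inc[of x z] c False by blast
    have a: "hle P x y \<or> rle P x y" "hle P y z \<or> rle P y z" using assms unfolding tle_def by auto
    show ?thesis
    proof (cases "hle P x z \<or> rle P x z")
      case True then show ?thesis unfolding tle_def by blast
    next
      case nt: False
      have zx: "hle P z x \<or> rle P z x" using i3 nt by blast
      have hh: "hle P x y \<Longrightarrow> hle P y z \<Longrightarrow> False" using pp_htrans nt by blast
      have rr: "rle P x y \<Longrightarrow> rle P y z \<Longrightarrow> False" using pp_rtrans nt by blast
      have hr: "hle P x y \<Longrightarrow> rle P y z \<Longrightarrow> False"
        using zx pp_htrans[of z x y] i2(1) pp_rtrans[of y z x] i1(1) by blast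
      have rh: "rle P x y \<Longrightarrow> hle P y z \<Longrightarrow> False"
        using zx pp_htrans[of y z x] i1(2) pp_rtrans[of z x y] i2(2) by blast
      show ?thesis using a hh rr hr rh by blast
    qed
  qed
qed

lemma rank_less: assumes "tle P x y" "x \<noteq> y" shows "rank P x < rank P y"
proof -
  have c: "x \<in> pcar P" "y \<in> pcar P" using assms tle_car by auto
  have "{z \<in> pcar P. tle P z x \<and> z \<noteq> x} \<subset> {z \<in> pcar P. tle P z y \<and> z \<noteq> y}"
    using assms c tle_trans tle_antisym tle_refl by blast
  then show ?thesis unfolding rank_def using pp_fin by (auto intro: psubset_card_mono)
qed

lemma rank_le_iff: "x \<in> pcar P \<Longrightarrow> y \<in> pcar P \<Longrightarrow> tle P x y \<longleftrightarrow> rank P x \<le> rank P y"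
  using rank_less tle_total
  by (metis leD le_eq_less_or_eq)

lemma rank_inj: "inj_on (rank P) (pcar P)"
  by (metis inj_onI nat_less_le rank_less tle_total)

lemma rank_lt: "x \<in> pcar P \<Longrightarrow> rank P x < card (pcar P)"
proof -
  assume x: "x \<in> pcar P"
  have "{y \<in> pcar P. tle P y x \<and> y \<noteq> x} \<subset> pcar P" using x by blast
  then show ?thesis unfolding rank_def using pp_fin psubset_card_mono by blast
qed

lemma rank_bij: "bij_betw (rank P) (pcar P) {0..<card (pcar P)}"
proof -
  have "rank P ` pcar P \<subseteq> {0..<card (pcar P)}" using rank_lt by auto
  moreover have "card (rank P ` pcar P) = card {0..<card (pcar P)}"
    using card_image rank_inj by fastforce
  ultimately have "rank P ` pcar P = {0..<card (pcar P)}"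
    by (simp add: card_subset_eq)
  then show ?thesis using rank_inj bij_betw_def by blast
qed
end




lemma iso_refl: "pp_iso P P"
  unfolding pp_iso_def by (rule exI[of _ id]) auto

lemma iso_sym: assumes "pp_iso P Q" shows "pp_iso Q P"
proof -
  obtain f where f: "bij_betw f (pcar P) (pcar Q)"
    "\<forall>x\<in>pcar P. \<forall>y\<in>pcar P. (hle P x y \<longleftrightarrow> hle Q (f x) (f y)) \<and> (rle P x y \<longleftrightarrow> rle Q (f x) (f y))"
    using assms unfolding pp_iso_def by blast
  let ?g = "inv_into (pcar P) f"
  have g: "bij_betw ?g (pcar Q) (pcar P)" using f(1) bij_betw_inv_into by blast
  have "\<forall>x\<in>pcar Q. \<forall>y\<in>pcar Q. (hle Q x y \<longleftrightarrow> hle P (?g x) (?g y)) \<and> (rle Q x y \<longleftrightarrow> rle P (?g x) (?g y))"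
  proof (intro ballI)
    fix x y assume xy: "x \<in> pcar Q" "y \<in> pcar Q"
    have "?g x \<in> pcar P" "?g y \<in> pcar P" using g xy bij_betwE by blast+
    moreover have "f (?g x) = x" "f (?g y) = y" using f(1) xy bij_betw_inv_into_right by fastforce+
    ultimately show "(hle Q x y \<longleftrightarrow> hle P (?g x) (?g y)) \<and> (rle Q x y \<longleftrightarrow> rle P (?g x) (?g y))"
      using f(2) by metis
  qed
  then show ?thesis unfolding pp_iso_def using g by blast
qed

lemma iso_trans: assumes "pp_iso P Q" "pp_iso Q R" shows "pp_iso P R"
proof -
  obtain f where f: "bij_betw f (pcar P) (pcar Q)"
    "\<forall>x\<in>pcar P. \<forall>y\<in>pcar P. (hle P x y \<longleftrightarrow> hle Q (f x) (f y)) \<and> (rle P x y \<longleftrightarrow> rle Q (f x) (f y))"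
    using assms unfolding pp_iso_def by blast
  obtain g where g: "bij_betw g (pcar Q) (pcar R)"
    "\<forall>x\<in>pcar Q. \<forall>y\<in>pcar Q. (hle Q x y \<longleftrightarrow> hle R (g x) (g y)) \<and> (rle Q x y \<longleftrightarrow> rle R (g x) (g y))"
    using assms unfolding pp_iso_def by blast
  have "bij_betw (g \<circ> f) (pcar P) (pcar R)" using f g bij_betw_trans by blast
  moreover have "\<forall>x\<in>pcar P. \<forall>y\<in>pcar P. (hle P x y \<longleftrightarrow> hle R ((g\<circ>f) x) ((g\<circ>f) y)) \<and> (rle P x y \<longleftrightarrow> rle R ((g\<circ>f) x) ((g\<circ>f) y))"
    using f g bij_betwE by (simp; blast)
  ultimately show ?thesis unfolding pp_iso_def by blast
qed

lemma iso_card: "pp_iso P Q \<Longrightarrow> card (pcar P) = card (pcar Q)"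
  unfolding pp_iso_def using bij_betw_same_card by blast

lemma iso_tle: "\<forall>x\<in>pcar P. \<forall>y\<in>pcar P. (hle P x y \<longleftrightarrow> hle Q (f x) (f y)) \<and> (rle P x y \<longleftrightarrow> rle Q (f x) (f y))
  \<Longrightarrow> x \<in> pcar P \<Longrightarrow> y \<in> pcar P \<Longrightarrow> tle P x y \<longleftrightarrow> tle Q (f x) (f y)"
  unfolding tle_def by blast

lemma iso_rank:
  assumes f: "bij_betw f (pcar P) (pcar Q)"
    "\<forall>x\<in>pcar P. \<forall>y\<in>pcar P. (hle P x y \<longleftrightarrow> hle Q (f x) (f y)) \<and> (rle P x y \<longleftrightarrow> rle Q (f x) (f y))"
    and x: "x \<in> pcar P"
  shows "rank Q (f x) = rank P x"
proof -
  have inj: "\<And>a b. a \<in> pcar P \<Longrightarrow> b \<in> pcar P \<Longrightarrow> f a = f b \<Longrightarrow> a = b"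
    using f(1) unfolding bij_betw_def inj_on_def by blast
  have S: "{y \<in> pcar Q. tle Q y (f x) \<and> y \<noteq> f x} = f ` {y \<in> pcar P. tle P y x \<and> y \<noteq> x}"
  proof (rule set_eqI, rule iffI)
    fix y assume "y \<in> {y \<in> pcar Q. tle Q y (f x) \<and> y \<noteq> f x}"
    then have y: "y \<in> pcar Q" "tle Q y (f x)" "y \<noteq> f x" by auto
    obtain z where z: "z \<in> pcar P" "y = f z" using y(1) f(1) unfolding bij_betw_def by blast
    have "tle P z x" using iso_tle[OF f(2) z(1) x] y(2) z(2) by simp
    moreover have "z \<noteq> x" using y(3) z(2) by blast
    ultimately show "y \<in> f ` {y \<in> pcar P. tle P y x \<and> y \<noteq> x}" using z by blast
  next
    fix y assume "y \<in> f ` {y \<in> pcar P. tle P y x \<and> y \<noteq> x}"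
    then obtain z where z: "z \<in> pcar P" "tle P z x" "z \<noteq> x" "y = f z" by blast
    have "f z \<noteq> f x" using inj[OF z(1) x] z(3) by blast
    moreover have "tle Q (f z) (f x)" using iso_tle[OF f(2) z(1) x] z(2) by simp
    moreover have "f z \<in> pcar Q" using f(1) z(1) bij_betwE by blast
    ultimately show "y \<in> {y \<in> pcar Q. tle Q y (f x) \<and> y \<noteq> f x}" using z(4) by simp
  qed
  have "inj_on f {y \<in> pcar P. tle P y x \<and> y \<noteq> x}" using inj unfolding inj_on_def by blast
  then show ?thesis unfolding rank_def S by (simp add: card_image)
qed

lemma iso_plane:
  assumes Q: "plane_poset Q" and f: "bij_betw f (pcar P) (pcar Q)"
    "\<forall>x\<in>pcar P. \<forall>y\<in>pcar P. (hle P x y \<longleftrightarrow> hle Q (f x) (f y)) \<and> (rle P x y \<longleftrightarrow> rle Q (f x) (f y))"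
    and ch: "\<forall>x y. hle P x y \<longrightarrow> x \<in> pcar P \<and> y \<in> pcar P"
    and cr: "\<forall>x y. rle P x y \<longrightarrow> x \<in> pcar P \<and> y \<in> pcar P"
  shows "plane_poset P"
proof -
  have fin: "finite (pcar P)" using f(1) pp_fin[OF Q] bij_betw_finite by blast
  have inj: "\<And>x y. x \<in> pcar P \<Longrightarrow> y \<in> pcar P \<Longrightarrow> f x = f y \<Longrightarrow> x = y"
    using f(1) by (auto simp: bij_betw_def inj_on_def)
  have im: "\<And>x. x \<in> pcar P \<Longrightarrow> f x \<in> pcar Q" using f(1) bij_betwE by blast
  have T: "\<And>x y. x \<in> pcar P \<Longrightarrow> y \<in> pcar P \<Longrightarrow> (hle P x y \<longleftrightarrow> hle Q (f x) (f y)) \<and> (rle P x y \<longleftrightarrow> rle Q (f x) (f y))"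
    using f(2) by blast
  have 1: "\<forall>x\<in>pcar P. hle P x x" using T im pp_hrefl[OF Q] by blast
  have 2: "\<forall>x\<in>pcar P. rle P x x" using T im pp_rrefl[OF Q] by blast
  have 3: "\<forall>x y z. hle P x y \<longrightarrow> hle P y z \<longrightarrow> hle P x z"
  proof (intro allI impI)
    fix x y z assume a: "hle P x y" "hle P y z"
    then have c: "x \<in> pcar P" "y \<in> pcar P" "z \<in> pcar P" using ch by auto
    show "hle P x z" using T[OF c(1,2)] T[OF c(2,3)] T[OF c(1,3)] a pp_htrans[OF Q] by blast
  qed
  have 4: "\<forall>x y z. rle P x y \<longrightarrow> rle P y z \<longrightarrow> rle P x z"
  proof (intro allI impI)
    fix x y z assume a: "rle P x y" "rle P y z"
    then have c: "x \<in> pcar P" "y \<in> pcar P" "z \<in> pcar P" using cr by auto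
    show "rle P x z" using T[OF c(1,2)] T[OF c(2,3)] T[OF c(1,3)] a pp_rtrans[OF Q] by blast
  qed
  have 5: "\<forall>x y. hle P x y \<longrightarrow> hle P y x \<longrightarrow> x = y"
  proof (intro allI impI)
    fix x y assume a: "hle P x y" "hle P y x"
    then have c: "x \<in> pcar P" "y \<in> pcar P" using ch by auto
    show "x = y" using T[OF c(1,2)] T[OF c(2,1)] a pp_hanti[OF Q] inj[OF c] by blast
  qed
  have 6: "\<forall>x y. rle P x y \<longrightarrow> rle P y x \<longrightarrow> x = y"
  proof (intro allI impI)
    fix x y assume a: "rle P x y" "rle P y x"
    then have c: "x \<in> pcar P" "y \<in> pcar P" using cr by auto
    show "x = y" using T[OF c(1,2)] T[OF c(2,1)] a pp_ranti[OF Q] inj[OF c] by blast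
  qed
  have 7: "\<forall>x\<in>pcar P. \<forall>y\<in>pcar P. x \<noteq> y \<longrightarrow>
        ((hle P x y \<or> hle P y x) \<longleftrightarrow> \<not> (rle P x y \<or> rle P y x))"
  proof (intro ballI impI)
    fix x y assume c: "x \<in> pcar P" "y \<in> pcar P" and ne: "x \<noteq> y"
    have "f x \<noteq> f y" using inj[OF c] ne by blast
    then show "((hle P x y \<or> hle P y x) \<longleftrightarrow> \<not> (rle P x y \<or> rle P y x))"
      using T[OF c(1,2)] T[OF c(2,1)] pp_inc[OF Q, of "f x" "f y"] im c by blast
  qed
  show ?thesis unfolding pp_char by (intro conjI fin ch cr 1 2 3 4 5 6 7)
qed




lemma theta_props:
  assumes P: "plane_poset P" and Q: "plane_poset Q" and c: "card (pcar P) = card (pcar Q)"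
    and x: "x \<in> pcar P"
  shows "theta P Q x \<in> pcar Q \<and> rank Q (theta P Q x) = rank P x"
proof -
  have "rank P x \<in> {0..<card (pcar Q)}" using rank_lt[OF P x] c by simp
  then obtain y where y: "y \<in> pcar Q" "rank Q y = rank P x"
    using rank_bij[OF Q] unfolding bij_betw_def by (metis imageE)
  have u: "\<exists>!y. y \<in> pcar Q \<and> rank Q y = rank P x"
    using y rank_inj[OF Q] unfolding inj_on_def by metis
  have "theta P Q x = y" unfolding theta_def using u y by (simp add: the1_equality)
  then show ?thesis using y by simp
qed

lemma theta_inj:
  assumes P: "plane_poset P" and Q: "plane_poset Q" and c: "card (pcar P) = card (pcar Q)"
    and x: "x \<in> pcar P" and x': "x' \<in> pcar P" and e: "theta P Q x = theta P Q x'"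
  shows "x = x'"
proof -
  have "rank P x = rank P x'" using theta_props[OF P Q c x] theta_props[OF P Q c x'] e by metis
  then show ?thesis using rank_inj[OF P] x x' unfolding inj_on_def by blast
qed

lemma theta_surj:
  assumes P: "plane_poset P" and Q: "plane_poset Q" and c: "card (pcar P) = card (pcar Q)"
    and u: "u \<in> pcar Q"
  shows "\<exists>x\<in>pcar P. theta P Q x = u"
proof -
  have "rank Q u \<in> {0..<card (pcar P)}" using rank_lt[OF Q u] c by simp
  then obtain x where x: "x \<in> pcar P" "rank P x = rank Q u"
    using rank_bij[OF P] unfolding bij_betw_def by (metis imageE)
  have "rank Q (theta P Q x) = rank Q u" "theta P Q x \<in> pcar Q" using theta_props[OF P Q c x(1)] x by auto
  then have "theta P Q x = u" using rank_inj[OF Q] u unfolding inj_on_def by blast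
  then show ?thesis using x by blast
qed

lemma theta_tle:
  assumes P: "plane_poset P" and Q: "plane_poset Q" and c: "card (pcar P) = card (pcar Q)"
    and x: "x \<in> pcar P" and y: "y \<in> pcar P"
  shows "tle P x y \<longleftrightarrow> tle Q (theta P Q x) (theta P Q y)"
  using rank_le_iff[OF P x y] rank_le_iff[OF Q, of "theta P Q x" "theta P Q y"]
    theta_props[OF P Q c x] theta_props[OF P Q c y] by simp

lemma tle_iota: "tle (iota P) = tle P" unfolding tle_def iota_def by (auto intro!: ext)
lemma rank_iota: "rank (iota P) = rank P"
proof
  fix x
  have c: "pcar (iota P) = pcar P" by (simp add: iota_def)
  show "rank (iota P) x = rank P x" unfolding rank_def tle_iota c ..
qed
lemma theta_iota: "theta (iota P) Q = theta P Q"
  unfolding theta_def rank_iota ..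

lemma canon_rank: assumes C: "canonical C" and i: "i \<in> pcar C" shows "rank C i = i"
proof -
  have P: "plane_poset C" and car: "pcar C = {0..<card (pcar C)}"
    and le: "\<forall>x\<in>pcar C. \<forall>y\<in>pcar C. x \<le> y \<longrightarrow> tle C x y" using C unfolding canonical_def by auto
  have "{y \<in> pcar C. tle C y i \<and> y \<noteq> i} = {0..<i}"
  proof (rule set_eqI, rule iffI)
    fix y assume "y \<in> {y \<in> pcar C. tle C y i \<and> y \<noteq> i}"
    then have y: "y \<in> pcar C" "tle C y i" "y \<noteq> i" by auto
    have "y < i"
    proof (rule ccontr)
      assume "\<not> y < i" then have "i \<le> y" by simp
      then have "tle C i y" using le i y(1) by blast
      then show False using tle_antisym[OF P y(2)] y(3) by blast
    qed
    then show "y \<in> {0..<i}" by simp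
  next
    fix y assume "y \<in> {0..<i}"
    then have y: "y < i" by simp
    have yc: "y \<in> pcar C" using y i car by (metis atLeastLessThan_iff less_trans zero_le)
    have "tle C y i" using le yc i y by simp
    then show "y \<in> {y \<in> pcar C. tle C y i \<and> y \<noteq> i}" using yc y by simp
  qed
  then show ?thesis unfolding rank_def by simp
qed

lemma canonical_unique:
  assumes C: "canonical C" and D: "canonical D" and iso: "pp_iso C D"
  shows "C = D"
proof -
  obtain f where f: "bij_betw f (pcar C) (pcar D)"
    "\<forall>x\<in>pcar C. \<forall>y\<in>pcar C. (hle C x y \<longleftrightarrow> hle D (f x) (f y)) \<and> (rle C x y \<longleftrightarrow> rle D (f x) (f y))"
    using iso unfolding pp_iso_def by blast
  have PC: "plane_poset C" and PD: "plane_poset D" using C D unfolding canonical_def by auto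
  have car: "pcar C = pcar D" using C D iso_card[OF iso] unfolding canonical_def by metis
  have fi: "\<And>i. i \<in> pcar C \<Longrightarrow> f i = i"
  proof -
    fix i assume i: "i \<in> pcar C"
    have fiD: "f i \<in> pcar D" using f(1) i bij_betwE by blast
    have "rank D (f i) = rank C i" using iso_rank[OF f i] .
    then show "f i = i" using canon_rank[OF C i] canon_rank[OF D fiD] by simp
  qed
  have h: "hle C = hle D"
  proof (intro ext)
    fix x y show "hle C x y = hle D x y"
    proof (cases "x \<in> pcar C \<and> y \<in> pcar C")
      case True then show ?thesis using f(2) fi by metis
    next
      case False then show ?thesis using pp_hcar[OF PC] pp_hcar[OF PD] car by metis
    qed
  qed
  have r: "rle C = rle D"
  proof (intro ext)
    fix x y show "rle C x y = rle D x y"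
    proof (cases "x \<in> pcar C \<and> y \<in> pcar C")
      case True then show ?thesis using f(2) fi by metis
    next
      case False then show ?thesis using pp_rcar[OF PC] pp_rcar[OF PD] car by metis
    qed
  qed
  show ?thesis by (rule plane_poset.equality) (simp_all add: car h r)
qed

lemma canonical_exists:
  assumes R: "plane_poset R"
  shows "\<exists>C. canonical C \<and> pp_iso C R"
proof -
  define n where "n = card (pcar R)"
  define ri where "ri = inv_into (pcar R) (rank R)"
  have rb: "bij_betw (rank R) (pcar R) {0..<n}" using rank_bij[OF R] n_def by simp
  have rib: "bij_betw ri {0..<n} (pcar R)" using rb bij_betw_inv_into ri_def by blast
  have rk: "\<And>i. i < n \<Longrightarrow> rank R (ri i) = i"
    using rb unfolding ri_def by (simp add: bij_betw_inv_into_right)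
  define C where "C = \<lparr> pcar = {0..<n}, hle = (\<lambda>i j. i < n \<and> j < n \<and> hle R (ri i) (ri j)),
      rle = (\<lambda>i j. i < n \<and> j < n \<and> rle R (ri i) (ri j)) \<rparr>"
  have rel: "\<forall>x\<in>pcar C. \<forall>y\<in>pcar C. (hle C x y \<longleftrightarrow> hle R (ri x) (ri y)) \<and> (rle C x y \<longleftrightarrow> rle R (ri x) (ri y))"
    unfolding C_def by simp
  have b: "bij_betw ri (pcar C) (pcar R)" using rib unfolding C_def by simp
  have P: "plane_poset C"
    by (rule iso_plane[OF R b rel]) (simp_all add: C_def)
  have iso: "pp_iso C R" unfolding pp_iso_def using b rel by blast
  have "\<forall>x\<in>pcar C. \<forall>y\<in>pcar C. x \<le> y \<longrightarrow> tle C x y"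
  proof (intro ballI impI)
    fix x y assume x: "x \<in> pcar C" and y: "y \<in> pcar C" and le: "x \<le> y"
    have xn: "x < n" "y < n" using x y unfolding C_def by auto
    have "ri x \<in> pcar R" "ri y \<in> pcar R" using rib xn bij_betwE by fastforce+
    then have "tle R (ri x) (ri y)" using rank_le_iff[OF R] rk xn le by simp
    then show "tle C x y" using iso_tle[OF rel x y] by simp
  qed
  moreover have "pcar C = {0..<card (pcar C)}" unfolding C_def by simp
  ultimately have "canonical C" unfolding canonical_def using P by blast
  then show ?thesis using iso by blast
qed

lemma canon_eq: "canonical C \<Longrightarrow> pp_iso C R \<Longrightarrow> canon R = C"
  unfolding canon_def
  by (rule the_equality) (auto intro: canonical_unique iso_trans iso_sym)

lemma canon_props: "plane_poset R \<Longrightarrow> canonical (canon R) \<and> pp_iso (canon R) R"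
  using canonical_exists canon_eq by metis

lemma canon_iso: "plane_poset R \<Longrightarrow> pp_iso R R' \<Longrightarrow> canon R' = canon R"
  using canon_props canon_eq iso_trans by metis

lemma dots_plane: "plane_poset (dots n)"
  unfolding pp_char dots_def by auto

lemma dots_canonical: "canonical (dots n)"
  unfolding canonical_def using dots_plane by (auto simp: dots_def tle_def)

lemma dots_iff:
  assumes P: "plane_poset P"
  shows "(\<exists>n. pp_iso P (dots n)) \<longleftrightarrow> (\<forall>x y. hle P x y \<longrightarrow> x = y)"
proof
  assume "\<exists>n. pp_iso P (dots n)"
  then obtain n f where f: "bij_betw f (pcar P) (pcar (dots n))"
    "\<forall>x\<in>pcar P. \<forall>y\<in>pcar P. (hle P x y \<longleftrightarrow> hle (dots n) (f x) (f y)) \<and> (rle P x y \<longleftrightarrow> rle (dots n) (f x) (f y))"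
    unfolding pp_iso_def by blast
  show "\<forall>x y. hle P x y \<longrightarrow> x = y"
  proof (intro allI impI)
    fix x y assume h: "hle P x y"
    then have c: "x \<in> pcar P" "y \<in> pcar P" using pp_hcar[OF P] by auto
    then have "f x = f y" using f(2) h by (simp add: dots_def)
    then show "x = y" using f(1) c unfolding bij_betw_def inj_on_def by blast
  qed
next
  assume hf: "\<forall>x y. hle P x y \<longrightarrow> x = y"
  define n where "n = card (pcar P)"
  have rb: "bij_betw (rank P) (pcar P) (pcar (dots n))" using rank_bij[OF P] n_def by (simp add: dots_def)
  have "\<forall>x\<in>pcar P. \<forall>y\<in>pcar P. (hle P x y \<longleftrightarrow> hle (dots n) (rank P x) (rank P y)) \<and> (rle P x y \<longleftrightarrow> rle (dots n) (rank P x) (rank P y))"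
  proof (intro ballI)
    fix x y assume x: "x \<in> pcar P" and y: "y \<in> pcar P"
    have lt: "rank P x < n" "rank P y < n" using rank_lt[OF P] x y n_def by auto
    have "hle P x y \<longleftrightarrow> x = y" using hf pp_hrefl[OF P] x by blast
    also have "\<dots> \<longleftrightarrow> rank P x = rank P y" using rank_inj[OF P] x y unfolding inj_on_def by blast
    finally have 1: "hle P x y \<longleftrightarrow> hle (dots n) (rank P x) (rank P y)" using lt by (simp add: dots_def)
    have "rle P x y \<longleftrightarrow> tle P x y" unfolding tle_def using hf pp_rrefl[OF P] x by blast
    also have "\<dots> \<longleftrightarrow> rank P x \<le> rank P y" using rank_le_iff[OF P x y] .
    finally have 2: "rle P x y \<longleftrightarrow> rle (dots n) (rank P x) (rank P y)" using lt by (simp add: dots_def)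
    show "(hle P x y \<longleftrightarrow> hle (dots n) (rank P x) (rank P y)) \<and> (rle P x y \<longleftrightarrow> rle (dots n) (rank P x) (rank P y))"
      using 1 2 by blast
  qed
  then show "\<exists>n. pp_iso P (dots n)" unfolding pp_iso_def using rb by blast
qed




lemma pairing_main:
  assumes P: "plane_poset P" and Q: "plane_poset Q"
  shows "(pairing0 P Q :: 'k::field) \<noteq> 0 \<longleftrightarrow> (\<exists>n. pp_iso P (dots n) \<and> pp_iso Q (dots n))"
proof
  assume nz: "(pairing0 P Q :: 'k) \<noteq> 0"
  have le: "pp_le (iota P) Q" using nz unfolding pairing0_def by (auto split: if_splits)
  have "(0::'k) ^ phi P Q \<noteq> 0" using nz le unfolding pairing0_def by simp
  then have ph: "phi P Q = 0" by (metis power_0_Suc not0_implies_Suc)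
  have c: "card (pcar P) = card (pcar Q)" using le unfolding pp_le_def by (simp add: iota_def)
  have pl: "\<And>x y. x \<in> pcar P \<Longrightarrow> y \<in> pcar P \<Longrightarrow> hle Q (theta P Q x) (theta P Q y) \<Longrightarrow> rle P x y"
    using le unfolding pp_le_def theta_iota by (simp add: iota_def)
  let ?S1 = "{(x, y). x \<in> pcar P \<and> y \<in> pcar P \<and> rle P x y \<and> x \<noteq> y \<and>
            hle Q (theta P Q x) (theta P Q y) \<and> theta P Q x \<noteq> theta P Q y}"
  let ?S2 = "{(x, y). x \<in> pcar P \<and> y \<in> pcar P \<and> hle P x y \<and> x \<noteq> y \<and>
            rle Q (theta P Q x) (theta P Q y) \<and> theta P Q x \<noteq> theta P Q y}"
  have f1: "finite ?S1" by (rule finite_subset[of _ "pcar P \<times> pcar P"]) (auto simp: pp_fin[OF P])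
  have f2: "finite ?S2" by (rule finite_subset[of _ "pcar P \<times> pcar P"]) (auto simp: pp_fin[OF P])
  have "card ?S1 = 0" "card ?S2 = 0" using ph unfolding phi_def by auto
  then have e1: "?S1 = {}" and e2: "?S2 = {}" using f1 f2 by auto
  have hP: "\<forall>x y. hle P x y \<longrightarrow> x = y"
  proof (intro allI impI, rule ccontr)
    fix x y assume h: "hle P x y" and ne: "x \<noteq> y"
    have xy: "x \<in> pcar P" "y \<in> pcar P" using pp_hcar[OF P h] by auto
    have "tle Q (theta P Q x) (theta P Q y)" using theta_tle[OF P Q c xy] h unfolding tle_def by blast
    moreover have tne: "theta P Q x \<noteq> theta P Q y" using theta_inj[OF P Q c xy] ne by blast
    ultimately have "hle Q (theta P Q x) (theta P Q y) \<or> rle Q (theta P Q x) (theta P Q y)" unfolding tle_def by blast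
    then show False
    proof
      assume "hle Q (theta P Q x) (theta P Q y)"
      then have "rle P x y" using pl xy by blast
      then show False using pp_inc[OF P xy ne] h by blast
    next
      assume "rle Q (theta P Q x) (theta P Q y)"
      then have "(x, y) \<in> ?S2" using xy h ne tne by blast
      then show False using e2 by blast
    qed
  qed
  have hQ: "\<forall>u v. hle Q u v \<longrightarrow> u = v"
  proof (intro allI impI, rule ccontr)
    fix u v assume h: "hle Q u v" and ne: "u \<noteq> v"
    have uv: "u \<in> pcar Q" "v \<in> pcar Q" using pp_hcar[OF Q h] by auto
    obtain x y where xy: "x \<in> pcar P" "y \<in> pcar P" "theta P Q x = u" "theta P Q y = v"
      using theta_surj[OF P Q c] uv by metis
    have "rle P x y" using pl[OF xy(1,2)] h xy by simp
    moreover have "x \<noteq> y" using ne xy by blast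
    ultimately have "(x, y) \<in> ?S1" using xy h ne by blast
    then show False using e1 by blast
  qed
  obtain n where n: "pp_iso P (dots n)" using dots_iff[OF P] hP by blast
  obtain m where m: "pp_iso Q (dots m)" using dots_iff[OF Q] hQ by blast
  have "n = m" using iso_card[OF n] iso_card[OF m] c by (simp add: dots_def)
  then show "\<exists>n. pp_iso P (dots n) \<and> pp_iso Q (dots n)" using n m by blast
next
  assume "\<exists>n. pp_iso P (dots n) \<and> pp_iso Q (dots n)"
  then obtain n where n: "pp_iso P (dots n)" and m: "pp_iso Q (dots n)" by blast
  have hP: "\<forall>x y. hle P x y \<longrightarrow> x = y" using dots_iff[OF P] n by blast
  have hQ: "\<forall>x y. hle Q x y \<longrightarrow> x = y" using dots_iff[OF Q] m by blast
  have c: "card (pcar P) = card (pcar Q)" using iso_card[OF n] iso_card[OF m] by simp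
  have le: "pp_le (iota P) Q"
    unfolding pp_le_def theta_iota
  proof (intro conjI ballI impI)
    show "card (pcar (iota P)) = card (pcar Q)" using c by (simp add: iota_def)
  next
    fix x y assume x: "x \<in> pcar (iota P)" and y: "y \<in> pcar (iota P)"
      and h: "hle Q (theta P Q x) (theta P Q y)"
    have xy: "x \<in> pcar P" "y \<in> pcar P" using x y by (auto simp: iota_def)
    have "x = y" using theta_inj[OF P Q c xy] hQ h by blast
    then show "hle (iota P) x y" using pp_rrefl[OF P] xy by (simp add: iota_def)
  qed
  have s1: "{(x, y). x \<in> pcar P \<and> y \<in> pcar P \<and> rle P x y \<and> x \<noteq> y \<and>
            hle Q (theta P Q x) (theta P Q y) \<and> theta P Q x \<noteq> theta P Q y} = {}" using hQ by blast
  have s2: "{(x, y). x \<in> pcar P \<and> y \<in> pcar P \<and> hle P x y \<and> x \<noteq> y \<and>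
            rle Q (theta P Q x) (theta P Q y) \<and> theta P Q x \<noteq> theta P Q y} = {}" using hP by blast
  have "phi P Q = 0" unfolding phi_def s1 s2 by simp
  then show "(pairing0 P Q :: 'k) \<noteq> 0" unfolding pairing0_def using le by simp
qed

lemma pcar_prod: "pcar (pp_prod P Q) = Inl ` pcar P \<union> Inr ` pcar Q"
  by (simp add: pp_prod_def)
lemma hle_prod[simp]:
  "hle (pp_prod P Q) (Inl x) (Inl y) = hle P x y"
  "hle (pp_prod P Q) (Inr a) (Inr b) = hle Q a b"
  "hle (pp_prod P Q) (Inl x) (Inr b) = False"
  "hle (pp_prod P Q) (Inr a) (Inl y) = False"
  by (simp_all add: pp_prod_def)
lemma rle_prod[simp]:
  "rle (pp_prod P Q) (Inl x) (Inl y) = rle P x y"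
  "rle (pp_prod P Q) (Inr a) (Inr b) = rle Q a b"
  "rle (pp_prod P Q) (Inl x) (Inr b) = (x \<in> pcar P \<and> b \<in> pcar Q)"
  "rle (pp_prod P Q) (Inr a) (Inl y) = False"
  by (simp_all add: pp_prod_def)

lemma prod_plane:
  assumes P: "plane_poset P" and Q: "plane_poset Q"
  shows "plane_poset (pp_prod P Q)"
proof -
  let ?R = "pp_prod P Q"
  have 0: "finite (pcar ?R)" using pp_fin[OF P] pp_fin[OF Q] by (simp add: pcar_prod)
  have 1: "\<forall>x y. hle ?R x y \<longrightarrow> x \<in> pcar ?R \<and> y \<in> pcar ?R"
  proof (intro allI impI)
    fix u v assume "hle ?R u v" then show "u \<in> pcar ?R \<and> v \<in> pcar ?R"
      by (cases u; cases v) (auto simp: pcar_prod dest: pp_hcar[OF P] pp_hcar[OF Q])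
  qed
  have 2: "\<forall>x y. rle ?R x y \<longrightarrow> x \<in> pcar ?R \<and> y \<in> pcar ?R"
  proof (intro allI impI)
    fix u v assume "rle ?R u v" then show "u \<in> pcar ?R \<and> v \<in> pcar ?R"
      by (cases u; cases v) (auto simp: pcar_prod dest: pp_rcar[OF P] pp_rcar[OF Q])
  qed
  have 3: "\<forall>x\<in>pcar ?R. hle ?R x x" using pp_hrefl[OF P] pp_hrefl[OF Q] by (auto simp: pcar_prod)
  have 4: "\<forall>x\<in>pcar ?R. rle ?R x x" using pp_rrefl[OF P] pp_rrefl[OF Q] by (auto simp: pcar_prod)
  have 5: "\<forall>x y z. hle ?R x y \<longrightarrow> hle ?R y z \<longrightarrow> hle ?R x z"
  proof (intro allI impI)
    fix u v w assume "hle ?R u v" "hle ?R v w" then show "hle ?R u w"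
      by (cases u; cases v; cases w) (auto intro: pp_htrans[OF P] pp_htrans[OF Q])
  qed
  have 6: "\<forall>x y z. rle ?R x y \<longrightarrow> rle ?R y z \<longrightarrow> rle ?R x z"
  proof (intro allI impI)
    fix u v w assume "rle ?R u v" "rle ?R v w" then show "rle ?R u w"
      by (cases u; cases v; cases w) (auto intro: pp_rtrans[OF P] pp_rtrans[OF Q]
           dest: pp_rcar[OF P] pp_rcar[OF Q])
  qed
  have 7: "\<forall>x y. hle ?R x y \<longrightarrow> hle ?R y x \<longrightarrow> x = y"
  proof (intro allI impI)
    fix u v assume "hle ?R u v" "hle ?R v u" then show "u = v"
      by (cases u; cases v) (auto intro: pp_hanti[OF P] pp_hanti[OF Q])
  qed
  have 8: "\<forall>x y. rle ?R x y \<longrightarrow> rle ?R y x \<longrightarrow> x = y"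
  proof (intro allI impI)
    fix u v assume "rle ?R u v" "rle ?R v u" then show "u = v"
      by (cases u; cases v) (auto intro: pp_ranti[OF P] pp_ranti[OF Q])
  qed
  have 9: "\<forall>x\<in>pcar ?R. \<forall>y\<in>pcar ?R. x \<noteq> y \<longrightarrow>
        ((hle ?R x y \<or> hle ?R y x) \<longleftrightarrow> \<not> (rle ?R x y \<or> rle ?R y x))"
  proof (intro ballI impI)
    fix u v assume u: "u \<in> pcar ?R" and v: "v \<in> pcar ?R" and ne: "u \<noteq> v"
    show "((hle ?R u v \<or> hle ?R v u) \<longleftrightarrow> \<not> (rle ?R u v \<or> rle ?R v u))"
    proof (cases u)
      case (Inl x) note ux = this
      show ?thesis
      proof (cases v)
        case (Inl y) then show ?thesis using ux u v ne pp_inc[OF P, of x y] by (auto simp: pcar_prod)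
      next
        case (Inr y) then show ?thesis using ux u v by (auto simp: pcar_prod)
      qed
    next
      case (Inr x) note ux = this
      show ?thesis
      proof (cases v)
        case (Inl y) then show ?thesis using ux u v by (auto simp: pcar_prod)
      next
        case (Inr y) then show ?thesis using ux u v ne pp_inc[OF Q, of x y] by (auto simp: pcar_prod)
      qed
    qed
  qed
  show ?thesis unfolding pp_char by (intro conjI 0 1 2 3 4 5 6 7 8 9)
qed

lemma restr_plane:
  assumes P: "plane_poset P"
  shows "plane_poset (restr P S)"
proof -
  let ?R = "restr P S"
  have 0: "finite (pcar ?R)" using pp_fin[OF P] by (simp add: restr_def)
  have 1: "\<forall>x y. hle ?R x y \<longrightarrow> x \<in> pcar ?R \<and> y \<in> pcar ?R" using pp_hcar[OF P] by (auto simp: restr_def)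
  have 2: "\<forall>x y. rle ?R x y \<longrightarrow> x \<in> pcar ?R \<and> y \<in> pcar ?R" using pp_rcar[OF P] by (auto simp: restr_def)
  have 3: "\<forall>x\<in>pcar ?R. hle ?R x x" using pp_hrefl[OF P] by (simp add: restr_def)
  have 4: "\<forall>x\<in>pcar ?R. rle ?R x x" using pp_rrefl[OF P] by (simp add: restr_def)
  have 5: "\<forall>x y z. hle ?R x y \<longrightarrow> hle ?R y z \<longrightarrow> hle ?R x z" using pp_htrans[OF P] by (simp add: restr_def) blast
  have 6: "\<forall>x y z. rle ?R x y \<longrightarrow> rle ?R y z \<longrightarrow> rle ?R x z" using pp_rtrans[OF P] by (simp add: restr_def) blast
  have 7: "\<forall>x y. hle ?R x y \<longrightarrow> hle ?R y x \<longrightarrow> x = y" using pp_hanti[OF P] by (simp add: restr_def)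
  have 8: "\<forall>x y. rle ?R x y \<longrightarrow> rle ?R y x \<longrightarrow> x = y" using pp_ranti[OF P] by (simp add: restr_def)
  have 9: "\<forall>x\<in>pcar ?R. \<forall>y\<in>pcar ?R. x \<noteq> y \<longrightarrow>
        ((hle ?R x y \<or> hle ?R y x) \<longleftrightarrow> \<not> (rle ?R x y \<or> rle ?R y x))"
    using pp_inc[OF P] by (simp add: restr_def)
  show ?thesis unfolding pp_char by (intro conjI 0 1 2 3 4 5 6 7 8 9)
qed

lemma prod_iso:
  assumes A: "pp_iso A A'" and B: "pp_iso B B'"
  shows "pp_iso (pp_prod A B) (pp_prod A' B')"
proof -
  obtain f where f: "bij_betw f (pcar A) (pcar A')"
    "\<forall>x\<in>pcar A. \<forall>y\<in>pcar A. (hle A x y \<longleftrightarrow> hle A' (f x) (f y)) \<and> (rle A x y \<longleftrightarrow> rle A' (f x) (f y))"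
    using A unfolding pp_iso_def by blast
  obtain g where g: "bij_betw g (pcar B) (pcar B')"
    "\<forall>x\<in>pcar B. \<forall>y\<in>pcar B. (hle B x y \<longleftrightarrow> hle B' (g x) (g y)) \<and> (rle B x y \<longleftrightarrow> rle B' (g x) (g y))"
    using B unfolding pp_iso_def by blast
  let ?h = "map_sum f g"
  have inj: "inj_on ?h (pcar (pp_prod A B))"
  proof (rule inj_onI)
    fix u v assume u: "u \<in> pcar (pp_prod A B)" and v: "v \<in> pcar (pp_prod A B)" and e: "?h u = ?h v"
    show "u = v" using u v e f(1) g(1)
      by (cases u; cases v) (auto simp: pcar_prod bij_betw_def inj_on_def)
  qed
  have im: "?h ` pcar (pp_prod A B) = pcar (pp_prod A' B')"
    using f(1) g(1) by (auto simp: pcar_prod bij_betw_def image_Un image_image)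
  have "bij_betw ?h (pcar (pp_prod A B)) (pcar (pp_prod A' B'))" using inj im bij_betw_def by blast
  moreover have "\<forall>x\<in>pcar (pp_prod A B). \<forall>y\<in>pcar (pp_prod A B).
     (hle (pp_prod A B) x y \<longleftrightarrow> hle (pp_prod A' B') (?h x) (?h y)) \<and>
     (rle (pp_prod A B) x y \<longleftrightarrow> rle (pp_prod A' B') (?h x) (?h y))"
  proof (intro ballI)
    fix u v assume u: "u \<in> pcar (pp_prod A B)" and v: "v \<in> pcar (pp_prod A B)"
    show "(hle (pp_prod A B) u v \<longleftrightarrow> hle (pp_prod A' B') (?h u) (?h v)) \<and>
     (rle (pp_prod A B) u v \<longleftrightarrow> rle (pp_prod A' B') (?h u) (?h v))"
      using u v f g by (cases u; cases v) (auto simp: pcar_prod bij_betwE)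
  qed
  ultimately show ?thesis unfolding pp_iso_def by blast
qed




definition goodI :: "'a plane_poset \<Rightarrow> 'a set \<Rightarrow> bool" where
  "goodI P I \<longleftrightarrow> biideal P I \<and> hcount P (pcar P - I) I = 0"

lemma good_rel:
  assumes P: "plane_poset P" and g: "goodI P I" and x: "x \<in> pcar P - I" and y: "y \<in> I"
  shows "rle P x y \<and> \<not> hle P x y \<and> \<not> hle P y x \<and> \<not> rle P y x"
proof -
  have bi: "biideal P I" and hc: "hcount P (pcar P - I) I = 0" using g unfolding goodI_def by auto
  have sub: "I \<subseteq> pcar P" using bi unfolding biideal_def by blast
  have yc: "y \<in> pcar P" using y sub by blast
  have ne: "x \<noteq> y" using x y by blast
  have fin: "finite {(x, y). x \<in> pcar P - I \<and> y \<in> I \<and> hle P x y \<and> x \<noteq> y}"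
    by (rule finite_subset[of _ "pcar P \<times> pcar P"]) (use sub pp_fin[OF P] in auto)
  have "{(x, y). x \<in> pcar P - I \<and> y \<in> I \<and> hle P x y \<and> x \<noteq> y} = {}"
    using hc fin unfolding hcount_def by simp
  then have 1: "\<not> hle P x y" using x y ne by blast
  have 2: "\<not> hle P y x" using bi y x unfolding biideal_def by blast
  have 3: "\<not> rle P y x" using bi y x unfolding biideal_def by blast
  have "rle P x y \<or> rle P y x" using pp_inc[OF P, of x y] x yc ne 1 2 by blast
  then show ?thesis using 1 2 3 by blast
qed

lemma good_chain:
  assumes P: "plane_poset P" and I: "goodI P I" and J: "goodI P J"
  shows "I \<subseteq> J \<or> J \<subseteq> I"
proof (rule ccontr)
  assume "\<not> (I \<subseteq> J \<or> J \<subseteq> I)"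
  then obtain x y where x: "x \<in> I" "x \<notin> J" and y: "y \<in> J" "y \<notin> I" by blast
  have sI: "I \<subseteq> pcar P" using I unfolding goodI_def biideal_def by blast
  have sJ: "J \<subseteq> pcar P" using J unfolding goodI_def biideal_def by blast
  have "rle P x y" using good_rel[OF P J, of x y] x y sI by blast
  moreover have "rle P y x" using good_rel[OF P I, of y x] x y sJ by blast
  ultimately have "x = y" using pp_ranti[OF P] by blast
  then show False using x y by blast
qed

lemma good_inj:
  assumes P: "plane_poset P" and I: "goodI P I" and J: "goodI P J"
    and c: "card (pcar P - I) = card (pcar P - J)"
  shows "I = J"
proof -
  have sI: "I \<subseteq> pcar P" using I unfolding goodI_def biideal_def by blast
  have sJ: "J \<subseteq> pcar P" using J unfolding goodI_def biideal_def by blast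
  have fin: "finite (pcar P)" using pp_fin[OF P] .
  have "I \<subseteq> J \<or> J \<subseteq> I" using good_chain[OF P I J] .
  then show ?thesis
  proof
    assume "I \<subseteq> J"
    then have "pcar P - J \<subseteq> pcar P - I" by blast
    then have "pcar P - J = pcar P - I" using c fin by (metis card_subset_eq finite_Diff)
    then show ?thesis using sI sJ by blast
  next
    assume "J \<subseteq> I"
    then have "pcar P - I \<subseteq> pcar P - J" by blast
    then have "pcar P - I = pcar P - J" using c fin by (metis card_subset_eq finite_Diff)
    then show ?thesis using sI sJ by blast
  qed
qed

lemma decomp_iso:
  assumes P: "plane_poset P" and g: "goodI P I"
  shows "pp_iso (pp_prod (restr P (pcar P - I)) (restr P I)) P"
proof -
  have sub: "I \<subseteq> pcar P" using g unfolding goodI_def biideal_def by blast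
  let ?R = "pp_prod (restr P (pcar P - I)) (restr P I)"
  let ?h = "case_sum id id :: 'a + 'a \<Rightarrow> 'a"
  have car: "pcar ?R = Inl ` (pcar P - I) \<union> Inr ` I" using sub by (auto simp: pcar_prod restr_def)
  have inj: "inj_on ?h (pcar ?R)"
    unfolding car by (rule inj_onI) auto
  have im: "?h ` pcar ?R = pcar P" unfolding car using sub by (auto simp: image_Un image_image)
  have "\<forall>u\<in>pcar ?R. \<forall>v\<in>pcar ?R. (hle ?R u v \<longleftrightarrow> hle P (?h u) (?h v)) \<and> (rle ?R u v \<longleftrightarrow> rle P (?h u) (?h v))"
  proof (intro ballI)
    fix u v assume u: "u \<in> pcar ?R" and v: "v \<in> pcar ?R"
    show "(hle ?R u v \<longleftrightarrow> hle P (?h u) (?h v)) \<and> (rle ?R u v \<longleftrightarrow> rle P (?h u) (?h v))"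
    proof (cases u)
      case (Inl x) note ux = this
      then have x: "x \<in> pcar P - I" using u unfolding car by auto
      show ?thesis
      proof (cases v)
        case (Inl y) then have "y \<in> pcar P - I" using v unfolding car by auto
        then show ?thesis using ux Inl x by (simp add: restr_def)
      next
        case (Inr y) then have "y \<in> I" using v unfolding car by auto
        then show ?thesis using ux Inr x good_rel[OF P g x] sub by (auto simp: restr_def)
      qed
    next
      case (Inr x) note ux = this
      then have x: "x \<in> I" using u unfolding car by auto
      show ?thesis
      proof (cases v)
        case (Inl y) then have y: "y \<in> pcar P - I" using v unfolding car by auto
        then show ?thesis using ux Inl x good_rel[OF P g y x] by (auto simp: restr_def)
      next
        case (Inr y) then have "y \<in> I" using v unfolding car by auto
        then show ?thesis using ux Inr x sub by (auto simp: restr_def)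
      qed
    qed
  qed
  then show ?thesis unfolding pp_iso_def using inj im bij_betw_def by blast
qed

lemma split_good:
  assumes P: "plane_poset P" and g: "pp_iso (pp_prod P1 P2) P"
  obtains I where "goodI P I" "pp_iso P1 (restr P (pcar P - I))" "pp_iso P2 (restr P I)"
proof -
  obtain f where f: "bij_betw f (pcar (pp_prod P1 P2)) (pcar P)"
    "\<forall>x\<in>pcar (pp_prod P1 P2). \<forall>y\<in>pcar (pp_prod P1 P2).
      (hle (pp_prod P1 P2) x y \<longleftrightarrow> hle P (f x) (f y)) \<and> (rle (pp_prod P1 P2) x y \<longleftrightarrow> rle P (f x) (f y))"
    using g unfolding pp_iso_def by blast
  define I where "I = f ` Inr ` pcar P2"
  have finj: "\<And>u v. u \<in> pcar (pp_prod P1 P2) \<Longrightarrow> v \<in> pcar (pp_prod P1 P2) \<Longrightarrow> f u = f v \<Longrightarrow> u = v"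
    using f(1) unfolding bij_betw_def inj_on_def by blast
  have fim: "f ` pcar (pp_prod P1 P2) = pcar P" using f(1) unfolding bij_betw_def by blast
  have cI: "pcar P - I = f ` Inl ` pcar P1"
  proof -
    have "pcar P = f ` Inl ` pcar P1 \<union> I" using fim unfolding I_def pcar_prod by (simp add: image_Un)
    moreover have "f ` Inl ` pcar P1 \<inter> I = {}"
      unfolding I_def using finj by (fastforce simp: pcar_prod)
    ultimately show ?thesis by blast
  qed
  have sub: "I \<subseteq> pcar P" using fim unfolding I_def pcar_prod by blast
  have bi: "biideal P I"
    unfolding biideal_def
  proof (intro conjI ballI impI)
    show "I \<subseteq> pcar P" by (rule sub)
  next
    fix x y assume x: "x \<in> I" and y: "y \<in> pcar P" and r: "hle P x y \<or> rle P x y"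
    obtain a where a: "a \<in> pcar P2" "x = f (Inr a)" using x unfolding I_def by blast
    obtain z where z: "z \<in> pcar (pp_prod P1 P2)" "y = f z" using y fim by blast
    have ia: "Inr a \<in> pcar (pp_prod P1 P2)" using a by (simp add: pcar_prod)
    have "hle (pp_prod P1 P2) (Inr a) z \<or> rle (pp_prod P1 P2) (Inr a) z" using f(2) ia z r a by blast
    then obtain b where "z = Inr b" by (cases z) auto
    then show "y \<in> I" using z unfolding I_def by (auto simp: pcar_prod)
  qed
  have hc: "hcount P (pcar P - I) I = 0"
  proof -
    have e: "{(x, y). x \<in> pcar P - I \<and> y \<in> I \<and> hle P x y \<and> x \<noteq> y} = {}"
    proof (rule ccontr)
      assume "{(x, y). x \<in> pcar P - I \<and> y \<in> I \<and> hle P x y \<and> x \<noteq> y} \<noteq> {}"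
      then obtain x y where xy: "x \<in> pcar P - I" "y \<in> I" "hle P x y" by blast
      obtain a where a: "a \<in> pcar P1" "x = f (Inl a)" using xy(1) cI by blast
      obtain b where b: "b \<in> pcar P2" "y = f (Inr b)" using xy(2) unfolding I_def by blast
      have "Inl a \<in> pcar (pp_prod P1 P2)" "Inr b \<in> pcar (pp_prod P1 P2)" using a b by (auto simp: pcar_prod)
      then have "hle (pp_prod P1 P2) (Inl a) (Inr b)" using f(2) xy(3) a b by blast
      then show False by simp
    qed
    show ?thesis unfolding hcount_def e by simp
  qed
  have good: "goodI P I" unfolding goodI_def using bi hc by blast
  have iso1: "pp_iso P1 (restr P (pcar P - I))"
    unfolding pp_iso_def
  proof (intro exI conjI)
    show "bij_betw (f \<circ> Inl) (pcar P1) (pcar (restr P (pcar P - I)))"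
    proof -
      have "inj_on (f \<circ> Inl) (pcar P1)" using finj by (auto simp: inj_on_def pcar_prod)
      moreover have "(f \<circ> Inl) ` pcar P1 = pcar (restr P (pcar P - I))"
        using cI by (auto simp: restr_def image_image)
      ultimately show ?thesis unfolding bij_betw_def by blast
    qed
    show "\<forall>x\<in>pcar P1. \<forall>y\<in>pcar P1. (hle P1 x y \<longleftrightarrow> hle (restr P (pcar P - I)) ((f \<circ> Inl) x) ((f \<circ> Inl) y)) \<and>
        (rle P1 x y \<longleftrightarrow> rle (restr P (pcar P - I)) ((f \<circ> Inl) x) ((f \<circ> Inl) y))"
    proof (intro ballI)
      fix x y assume x: "x \<in> pcar P1" and y: "y \<in> pcar P1"
      have ix: "Inl x \<in> pcar (pp_prod P1 P2)" "Inl y \<in> pcar (pp_prod P1 P2)" using x y by (auto simp: pcar_prod)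
      have m: "f (Inl x) \<in> pcar P - I" "f (Inl y) \<in> pcar P - I" using cI x y by auto
      show "(hle P1 x y \<longleftrightarrow> hle (restr P (pcar P - I)) ((f \<circ> Inl) x) ((f \<circ> Inl) y)) \<and>
        (rle P1 x y \<longleftrightarrow> rle (restr P (pcar P - I)) ((f \<circ> Inl) x) ((f \<circ> Inl) y))"
        using f(2)[rule_format, OF ix(1) ix(2)] m by (auto simp: restr_def)
    qed
  qed
  have iso2: "pp_iso P2 (restr P I)"
    unfolding pp_iso_def
  proof (intro exI conjI)
    show "bij_betw (f \<circ> Inr) (pcar P2) (pcar (restr P I))"
    proof -
      have "inj_on (f \<circ> Inr) (pcar P2)" using finj by (auto simp: inj_on_def pcar_prod)
      moreover have "(f \<circ> Inr) ` pcar P2 = pcar (restr P I)"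
        using sub unfolding I_def by (auto simp: restr_def image_image)
      ultimately show ?thesis unfolding bij_betw_def by blast
    qed
    show "\<forall>x\<in>pcar P2. \<forall>y\<in>pcar P2. (hle P2 x y \<longleftrightarrow> hle (restr P I) ((f \<circ> Inr) x) ((f \<circ> Inr) y)) \<and>
        (rle P2 x y \<longleftrightarrow> rle (restr P I) ((f \<circ> Inr) x) ((f \<circ> Inr) y))"
    proof (intro ballI)
      fix x y assume x: "x \<in> pcar P2" and y: "y \<in> pcar P2"
      have ix: "Inr x \<in> pcar (pp_prod P1 P2)" "Inr y \<in> pcar (pp_prod P1 P2)" using x y by (auto simp: pcar_prod)
      have m: "f (Inr x) \<in> I" "f (Inr y) \<in> I" using x y unfolding I_def by auto
      show "(hle P2 x y \<longleftrightarrow> hle (restr P I) ((f \<circ> Inr) x) ((f \<circ> Inr) y)) \<and>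
        (rle P2 x y \<longleftrightarrow> rle (restr P I) ((f \<circ> Inr) x) ((f \<circ> Inr) y))"
        using f(2)[rule_format, OF ix(1) ix(2)] m by (auto simp: restr_def)
    qed
  qed
  show ?thesis using that good iso1 iso2 by blast
qed




lemma part1:
  assumes P: "plane_poset P"
  shows "(delta0 P :: _ \<Rightarrow> 'k::field) = deconc P"
proof (rule ext)
  fix XY :: "nat plane_poset \<times> nat plane_poset"
  obtain X Y where XY: "XY = (X, Y)" by (cases XY)
  define f where "f = (\<lambda>I. (canon (restr P (pcar P - I)), canon (restr P I)))"
  define Gs where "Gs = {I. goodI P I}"
  define A where "A = {(P1, P2). canonical P1 \<and> canonical P2 \<and> pp_iso (pp_prod P1 P2) P}"
  have finB: "finite {I. biideal P I}"
    by (rule finite_subset[of _ "Pow (pcar P)"]) (auto simp: biideal_def pp_fin[OF P])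
  have GB: "Gs \<subseteq> {I. biideal P I}" unfolding Gs_def goodI_def by blast
  have cardf: "\<And>I. goodI P I \<Longrightarrow> card (pcar (fst (f I))) = card (pcar P - I)"
  proof -
    fix I assume "goodI P I"
    have "pp_iso (canon (restr P (pcar P - I))) (restr P (pcar P - I))"
      using canon_props[OF restr_plane[OF P]] by blast
    then have "card (pcar (canon (restr P (pcar P - I)))) = card (pcar (restr P (pcar P - I)))"
      by (rule iso_card)
    moreover have "pcar (restr P (pcar P - I)) = pcar P - I" by (auto simp: restr_def)
    ultimately show "card (pcar (fst (f I))) = card (pcar P - I)" unfolding f_def by simp
  qed
  have inj: "inj_on f Gs"
  proof (rule inj_onI)
    fix I J assume I: "I \<in> Gs" and J: "J \<in> Gs" and e: "f I = f J"
    have "card (pcar P - I) = card (pcar P - J)" using cardf I J e unfolding Gs_def by (metis mem_Collect_eq)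
    then show "I = J" using good_inj[OF P] I J unfolding Gs_def by blast
  qed
  have img: "f ` Gs = A"
  proof
    show "f ` Gs \<subseteq> A"
    proof
      fix Z assume "Z \<in> f ` Gs"
      then obtain I where I: "goodI P I" "Z = f I" unfolding Gs_def by blast
      have c1: "canonical (canon (restr P (pcar P - I))) \<and> pp_iso (canon (restr P (pcar P - I))) (restr P (pcar P - I))"
        using canon_props[OF restr_plane[OF P]] by blast
      have c2: "canonical (canon (restr P I)) \<and> pp_iso (canon (restr P I)) (restr P I)"
        using canon_props[OF restr_plane[OF P]] by blast
      have "pp_iso (pp_prod (canon (restr P (pcar P - I))) (canon (restr P I))) P"
        using iso_trans[OF prod_iso[OF c1[THEN conjunct2] c2[THEN conjunct2]] decomp_iso[OF P I(1)]] .
      then show "Z \<in> A" unfolding A_def I(2) f_def using c1 c2 by simp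
    qed
    show "A \<subseteq> f ` Gs"
    proof
      fix Z assume "Z \<in> A"
      then obtain P1 P2 where Z: "Z = (P1, P2)" "canonical P1" "canonical P2" "pp_iso (pp_prod P1 P2) P"
        unfolding A_def by blast
      obtain I where I: "goodI P I" "pp_iso P1 (restr P (pcar P - I))" "pp_iso P2 (restr P I)"
        using split_good[OF P Z(4)] by blast
      have "f I = (P1, P2)" unfolding f_def using canon_eq[OF Z(2) I(2)] canon_eq[OF Z(3) I(3)] by simp
      then show "Z \<in> f ` Gs" using I(1) Z(1) unfolding Gs_def by (metis image_eqI mem_Collect_eq)
    qed
  qed
  have "delta0 P (X, Y) = (\<Sum>I\<in>{I. biideal P I}.
       if canon (restr P (pcar P - I)) = X \<and> canon (restr P I) = Y
       then (0::'k) ^ hcount P (pcar P - I) I else 0)" by (simp add: delta0_def)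
  also have "\<dots> = (\<Sum>I\<in>Gs. if (X, Y) = f I then 1 else 0)"
    by (rule sum.mono_neutral_cong_right[OF finB GB]) (auto simp: Gs_def goodI_def f_def power_0_left)
  also have "\<dots> = (\<Sum>Z\<in>f ` Gs. if (X, Y) = Z then 1 else 0)"
    using sum.reindex[OF inj, of "\<lambda>Z. if (X, Y) = Z then (1::'k) else 0"] by (simp add: comp_def)
  also have "\<dots> = deconc P (X, Y)" unfolding img A_def deconc_def by simp
  finally show "(delta0 P :: _ \<Rightarrow> 'k::field) XY = deconc P XY" using XY by simp
qed




lemma canonical_plane: "canonical C \<Longrightarrow> plane_poset C" unfolding canonical_def by blast

lemma is_dot_canon: "canonical P \<Longrightarrow> is_dot P \<Longrightarrow> \<exists>n. P = dots n"
  unfolding is_dot_def using canonical_unique dots_canonical by blast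

lemma pairing_nondot1:
  "canonical P \<Longrightarrow> \<not> is_dot P \<Longrightarrow> plane_poset Q \<Longrightarrow> (pairing0 P Q :: 'k::field) = 0"
  using pairing_main[OF canonical_plane] unfolding is_dot_def by blast

lemma pairing_nondot2:
  "canonical P \<Longrightarrow> \<not> is_dot P \<Longrightarrow> plane_poset Q \<Longrightarrow> (pairing0 Q P :: 'k::field) = 0"
  using pairing_main[OF _ canonical_plane] unfolding is_dot_def by blast

lemma pairing_dots:
  assumes "canonical P"
  shows "(pairing0 P (dots n) :: 'k::field) \<noteq> 0 \<longleftrightarrow> P = dots n"
proof
  assume "(pairing0 P (dots n) :: 'k::field) \<noteq> 0"
  then obtain m where m: "pp_iso P (dots m)" "pp_iso (dots n) (dots m)"
    using pairing_main[OF canonical_plane[OF assms] dots_plane] by blast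
  have "pp_iso P (dots n)" using iso_trans[OF m(1) iso_sym[OF m(2)]] .
  then show "P = dots n" using canonical_unique assms dots_canonical by blast
next
  assume "P = dots n"
  then show "(pairing0 P (dots n) :: 'k::field) \<noteq> 0"
    using pairing_main[OF dots_plane dots_plane] iso_refl by blast
qed

lemma delta_sum: "finite S \<Longrightarrow> (\<Sum>P\<in>S. (c P :: 'k::field) * (if R = P then 1 else 0)) = (if R \<in> S then c R else 0)"
proof -
  assume "finite S"
  have "(\<Sum>P\<in>S. c P * (if R = P then 1 else 0)) = (\<Sum>P\<in>S. if R = P then c P else 0)"
    by (rule sum.cong) auto
  also have "\<dots> = (if R \<in> S then c R else 0)" using \<open>finite S\<close> by simp
  finally show ?thesis .
qed

lemma span_char:
  assumes "v \<in> (span_nondots :: (nat plane_poset \<Rightarrow> 'k::field) set)"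
  shows "v \<in> hpp \<and> (\<forall>P\<in>supp v. canonical P \<and> \<not> is_dot P)"
proof -
  obtain S c where S: "finite S" "\<forall>P\<in>S. canonical P \<and> \<not> is_dot P"
    "v = (\<lambda>R. \<Sum>P\<in>S. c P * (if R = P then 1 else 0))"
    using assms unfolding span_nondots_def by blast
  have v: "\<And>R. v R = (if R \<in> S then c R else 0)"
  proof -
    fix R show "v R = (if R \<in> S then c R else 0)" unfolding S(3) by (rule delta_sum[OF S(1)])
  qed
  have "supp v \<subseteq> S" unfolding supp_def using v by auto
  then show ?thesis using S(1,2) finite_subset unfolding hpp_def by blast
qed

lemma span_intro:
  fixes v :: "nat plane_poset \<Rightarrow> 'k::field"
  assumes "finite S" "\<forall>P\<in>S. canonical P \<and> \<not> is_dot P" "\<And>R. R \<notin> S \<Longrightarrow> v R = 0"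
  shows "v \<in> span_nondots"
proof -
  have "v = (\<lambda>R. \<Sum>P\<in>S. v P * (if R = P then 1 else 0))"
  proof (rule ext)
    fix R show "v R = (\<Sum>P\<in>S. v P * (if R = P then 1 else 0))"
      using delta_sum[OF assms(1), of v R] assms(3)[of R] by auto
  qed
  then show ?thesis unfolding span_nondots_def using assms(1,2) by blast
qed

lemma part3: "(kernel0 :: (nat plane_poset \<Rightarrow> 'k::field) set) = span_nondots"
proof
  show "(kernel0 :: (nat plane_poset \<Rightarrow> 'k) set) \<subseteq> span_nondots"
  proof
    fix v :: "nat plane_poset \<Rightarrow> 'k" assume vk: "v \<in> kernel0"
    have vh: "v \<in> hpp" and ker: "\<forall>w\<in>hpp. pairing0_ext v w = 0 \<and> pairing0_ext w v = 0"
      using vk unfolding kernel0_def by auto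
    have fs: "finite (supp v)" and cs: "\<forall>P\<in>supp v. canonical P" using vh unfolding hpp_def by auto
    have nd: "\<And>n. dots n \<notin> supp v"
    proof
      fix n assume dn: "dots n \<in> supp v"
      define w :: "nat plane_poset \<Rightarrow> 'k" where "w = (\<lambda>R. if R = dots n then 1 else 0)"
      have sw: "supp w = {dots n}" unfolding supp_def w_def by auto
      have wh: "w \<in> hpp" unfolding hpp_def using sw dots_canonical by auto
      have "pairing0_ext v w = (\<Sum>P\<in>supp v. v P * pairing0 P (dots n))"
        unfolding pairing0_ext_def sw by (simp add: w_def)
      also have "\<dots> = (\<Sum>P\<in>supp v. if P = dots n then v P * pairing0 P (dots n) else 0)"
        by (rule sum.cong) (use cs pairing_dots in auto)
      also have "\<dots> = v (dots n) * pairing0 (dots n) (dots n)" using fs dn by simp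
      finally have "v (dots n) * (pairing0 (dots n) (dots n) :: 'k) = 0" using ker wh by simp
      moreover have "(pairing0 (dots n) (dots n) :: 'k) \<noteq> 0" using pairing_dots dots_canonical by blast
      moreover have "v (dots n) \<noteq> 0" using dn unfolding supp_def by simp
      ultimately show False by simp
    qed
    have "\<forall>P\<in>supp v. canonical P \<and> \<not> is_dot P" using cs nd is_dot_canon by blast
    moreover have "\<And>R. R \<notin> supp v \<Longrightarrow> v R = 0" unfolding supp_def by simp
    ultimately show "v \<in> span_nondots" using span_intro fs by blast
  qed
  show "span_nondots \<subseteq> (kernel0 :: (nat plane_poset \<Rightarrow> 'k) set)"
  proof
    fix v :: "nat plane_poset \<Rightarrow> 'k" assume "v \<in> span_nondots"
    then have vh: "v \<in> hpp" and nd: "\<forall>P\<in>supp v. canonical P \<and> \<not> is_dot P" using span_char by blast+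
    have "\<forall>w\<in>hpp. pairing0_ext v w = 0 \<and> pairing0_ext w v = 0"
    proof
      fix w :: "nat plane_poset \<Rightarrow> 'k" assume "w \<in> hpp"
      then have cw: "\<forall>Q\<in>supp w. canonical Q" unfolding hpp_def by blast
      have "pairing0_ext v w = 0" unfolding pairing0_ext_def
      proof (rule sum.neutral, rule ballI, rule sum.neutral, rule ballI)
        fix P Q assume "P \<in> supp v" "Q \<in> supp w"
        then have "(pairing0 P Q :: 'k) = 0" using nd cw pairing_nondot1 canonical_plane by blast
        then show "v P * w Q * pairing0 P Q = 0" by simp
      qed
      moreover have "pairing0_ext w v = 0" unfolding pairing0_ext_def
      proof (rule sum.neutral, rule ballI, rule sum.neutral, rule ballI)
        fix Q P assume "Q \<in> supp w" "P \<in> supp v"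
        then have "(pairing0 Q P :: 'k) = 0" using nd cw pairing_nondot2 canonical_plane by blast
        then show "w Q * v P * pairing0 Q P = 0" by simp
      qed
      ultimately show "pairing0_ext v w = 0 \<and> pairing0_ext w v = 0" by blast
    qed
    then show "v \<in> kernel0" unfolding kernel0_def using vh by blast
  qed
qed

lemma prod_nondot:
  assumes P: "plane_poset P" and Q: "plane_poset Q" and d: "is_dot (canon (pp_prod P Q))"
  shows "is_dot P \<and> is_dot Q"
proof -
  have X: "plane_poset (pp_prod P Q)" using prod_plane[OF P Q] .
  obtain n where "pp_iso (canon (pp_prod P Q)) (dots n)" using d unfolding is_dot_def by blast
  then have "pp_iso (pp_prod P Q) (dots n)" using iso_trans iso_sym canon_props[OF X] by blast
  then have hf: "\<forall>x y. hle (pp_prod P Q) x y \<longrightarrow> x = y" using dots_iff[OF X] by blast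
  have "\<forall>x y. hle P x y \<longrightarrow> x = y"
  proof (intro allI impI)
    fix x y assume "hle P x y"
    then have "hle (pp_prod P Q) (Inl x) (Inl y)" by simp
    then show "x = y" using hf by blast
  qed
  moreover have "\<forall>x y. hle Q x y \<longrightarrow> x = y"
  proof (intro allI impI)
    fix x y assume "hle Q x y"
    then have "hle (pp_prod P Q) (Inr x) (Inr y)" by simp
    then show "x = y" using hf by blast
  qed
  ultimately show ?thesis using dots_iff[OF P] dots_iff[OF Q] unfolding is_dot_def by blast
qed

lemma hmult_span:
  fixes v w :: "nat plane_poset \<Rightarrow> 'k::field"
  assumes v: "v \<in> hpp" and w: "w \<in> hpp"
    and nd: "(\<forall>P\<in>supp v. \<not> is_dot P) \<or> (\<forall>Q\<in>supp w. \<not> is_dot Q)"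
  shows "hmult v w \<in> span_nondots"
proof -
  have fv: "finite (supp v)" and cv: "\<forall>P\<in>supp v. canonical P" using v unfolding hpp_def by auto
  have fw: "finite (supp w)" and cw: "\<forall>Q\<in>supp w. canonical Q" using w unfolding hpp_def by auto
  define S where "S = (\<lambda>(P, Q). canon (pp_prod P Q)) ` (supp v \<times> supp w)"
  have fS: "finite S" unfolding S_def using fv fw by simp
  have cS: "\<forall>T\<in>S. canonical T \<and> \<not> is_dot T"
  proof
    fix T assume "T \<in> S"
    then obtain PQ where PQ0: "PQ \<in> supp v \<times> supp w" "T = (\<lambda>(P, Q). canon (pp_prod P Q)) PQ"
      unfolding S_def by blast
    obtain P Q where PQ: "P \<in> supp v" "Q \<in> supp w" "T = canon (pp_prod P Q)"
      using PQ0 by (cases PQ) auto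
    have pP: "plane_poset P" "plane_poset Q" using PQ cv cw canonical_plane by auto
    have "canonical T" using canon_props[OF prod_plane[OF pP]] PQ(3) by blast
    moreover have "\<not> is_dot T" using prod_nondot[OF pP] PQ nd by blast
    ultimately show "canonical T \<and> \<not> is_dot T" by blast
  qed
  have z: "\<And>R. R \<notin> S \<Longrightarrow> hmult v w R = 0"
  proof -
    fix R assume R: "R \<notin> S"
    show "hmult v w R = 0" unfolding hmult_def
      by (rule sum.neutral, rule ballI, rule sum.neutral) (use R in \<open>auto simp: S_def\<close>)
  qed
  show ?thesis using span_intro[OF fS cS z] .
qed

lemma part4:
  "\<forall>v \<in> (span_nondots :: (nat plane_poset \<Rightarrow> 'k::field) set). \<forall>w \<in> hpp.
          hmult v w \<in> span_nondots \<and> hmult w v \<in> span_nondots"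
proof (intro ballI conjI)
  fix v w :: "nat plane_poset \<Rightarrow> 'k" assume v: "v \<in> span_nondots" and w: "w \<in> hpp"
  have vh: "v \<in> hpp" and nd: "\<forall>P\<in>supp v. canonical P \<and> \<not> is_dot P" using span_char[OF v] by blast+
  show "hmult v w \<in> span_nondots" using hmult_span[OF vh w] nd by blast
  show "hmult w v \<in> span_nondots" using hmult_span[OF w vh] nd by blast
qed

theorem proposition25:
  shows "(\<forall>P :: 'a plane_poset. plane_poset P \<longrightarrow> (delta0 P :: _ \<Rightarrow> 'k::field) = deconc P)
    \<and> (\<forall>(P :: 'b plane_poset) (Q :: 'c plane_poset). plane_poset P \<and> plane_poset Q \<longrightarrow>
          ((pairing0 P Q :: 'k) \<noteq> 0 \<longleftrightarrow> (\<exists>n. pp_iso P (dots n) \<and> pp_iso Q (dots n))))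
    \<and> (kernel0 :: (nat plane_poset \<Rightarrow> 'k) set) = span_nondots
    \<and> (\<forall>v \<in> (span_nondots :: (nat plane_poset \<Rightarrow> 'k) set). \<forall>w \<in> hpp.
          hmult v w \<in> span_nondots \<and> hmult w v \<in> span_nondots)"
  using part1 pairing_main part3 part4 by blast


end
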